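(* Let $d\ge1$ and let $G$ be the unweighted $d$-dimensional grid graph with side lengths $n_1,\dots,n_d$, having at least one inner node (equivalently $n_j\ge3$ for all $j$). Let $\mathfrak{L}=D^{-1/2}LD^{-1/2}=I-D^{-1/2}SD^{-1/2}$ be its normalized Laplacian. For an integer index vector $\mathbf{z}=[z_1,\dots,z_d]$ with $0\le z_j\le n_j-1$ and a real vector $\boldsymbol\delta^{\mathbf{z}}=[\delta^{\mathbf{z}}_1,\dots,\delta^{\mathbf{z}}_d]$ write $\theta_j=\frac{1}{n_j-1}\left(z_j\pi-2\delta^{\mathbf{z}}_j\right)$. The eigenvalues of $\mathfrak{L}$ are of the form $$\lambda_{\mathbf{z}}=1+\frac1d\sum_{j=1}^d\cos(\theta_j),$$ where $(\lambda_{\mathbf{z}},\boldsymbol\delta^{\mathbf{z}})$ is a solution of the system consisting of the equation $$2d\,\lambda_{\mathbf{z}}=\sum_{j=1}^d\bigl(2+2\cos(\theta_j)\bigr)$$ together with, for each $l=1,\dots,d$, the equation $$\lambda_{\mathbf{z}}=1+\cos(\theta_l)+\tan(\delta^{\mathbf{z}}_l)\sin(\theta_l),$$ and the corresponding eigenvectors $\mathbf{v}_{\mathbf{z}}$ have components $$(\mathbf{v}_{\mathbf{z}})_{\mathbf{x}}=D_{\mathbf{x}\mathbf{x}}^{1/2}\prod_{j=1}^d(-1)^{x_j}\cos\left((x_j-1)\theta_j+\delta^{\mathbf{z}}_j\right),\qquad \mathbf{x}=[x_1,\dots,x_d]\in V.$$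
   Context: The grid graph has vertex set $V=\{[x_1,\dots,x_d]\in\mathbb{Z}^d:1\le x_j\le n_j\}$, two vertices adjacent iff they differ in exactly one coordinate by exactly $1$. $S$ is the $0/1$ adjacency matrix, $D$ the diagonal degree matrix and $L=D-S$. An inner node is a vertex having two neighbours in every dimension (i.e. $1<x_j<n_j$ for all $j$). The entries $\delta^{\mathbf{z}}_j$ are called shifts. *)

theory Defs
  imports Complex_Main
begin

text \<open>Grid graph with d dimensions and side lengths n 0, ..., n (d-1)
  (dimensions are indexed 0..d-1 instead of 1..d).\<close>

definition grid_V :: "nat \<Rightarrow> (nat \<Rightarrow> nat) \<Rightarrow> (nat \<Rightarrow> nat) set" where
  "grid_V d n = {x. (\<forall>j<d. 1 \<le> x j \<and> x j \<le> n j) \<and> (\<forall>j\<ge>d. x j = 0)}"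

definition grid_adj :: "nat \<Rightarrow> (nat \<Rightarrow> nat) \<Rightarrow> (nat \<Rightarrow> nat) \<Rightarrow> (nat \<Rightarrow> nat) \<Rightarrow> bool" where
  "grid_adj d n x y \<longleftrightarrow> x \<in> grid_V d n \<and> y \<in> grid_V d n \<and>
     (\<exists>j<d. \<bar>int (x j) - int (y j)\<bar> = 1 \<and> (\<forall>i. i \<noteq> j \<longrightarrow> x i = y i))"

definition grid_S :: "nat \<Rightarrow> (nat \<Rightarrow> nat) \<Rightarrow> (nat \<Rightarrow> nat) \<Rightarrow> (nat \<Rightarrow> nat) \<Rightarrow> real" where
  "grid_S d n x y = (if grid_adj d n x y then 1 else 0)"

definition grid_deg :: "nat \<Rightarrow> (nat \<Rightarrow> nat) \<Rightarrow> (nat \<Rightarrow> nat) \<Rightarrow> real" where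
  "grid_deg d n x = (\<Sum>y\<in>grid_V d n. grid_S d n x y)"

definition grid_L :: "nat \<Rightarrow> (nat \<Rightarrow> nat) \<Rightarrow> (nat \<Rightarrow> nat) \<Rightarrow> (nat \<Rightarrow> nat) \<Rightarrow> real" where
  "grid_L d n x y = (if x = y then grid_deg d n x else 0) - grid_S d n x y"

definition grid_nlap :: "nat \<Rightarrow> (nat \<Rightarrow> nat) \<Rightarrow> (nat \<Rightarrow> nat) \<Rightarrow> (nat \<Rightarrow> nat) \<Rightarrow> real" where
  "grid_nlap d n x y =
     (1 / sqrt (grid_deg d n x)) * grid_L d n x y * (1 / sqrt (grid_deg d n y))"

definition is_eigenpair :: "('v set) \<Rightarrow> ('v \<Rightarrow> 'v \<Rightarrow> real) \<Rightarrow> real \<Rightarrow> ('v \<Rightarrow> real) \<Rightarrow> bool" where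
  "is_eigenpair V M lam v \<longleftrightarrow> (\<exists>x\<in>V. v x \<noteq> 0) \<and>
     (\<forall>x\<in>V. (\<Sum>y\<in>V. M x y * v y) = lam * v x)"

definition grid_theta :: "(nat \<Rightarrow> nat) \<Rightarrow> (nat \<Rightarrow> nat) \<Rightarrow> (nat \<Rightarrow> real) \<Rightarrow> nat \<Rightarrow> real" where
  "grid_theta n z \<delta> j = (real (z j) * pi - 2 * \<delta> j) / (real (n j) - 1)"

definition grid_vec :: "nat \<Rightarrow> (nat \<Rightarrow> nat) \<Rightarrow> (nat \<Rightarrow> nat) \<Rightarrow> (nat \<Rightarrow> real) \<Rightarrow> (nat \<Rightarrow> nat) \<Rightarrow> real" where
  "grid_vec d n z \<delta> x = sqrt (grid_deg d n x) *
     (\<Prod>j<d. (-1) ^ (x j) * cos ((real (x j) - 1) * grid_theta n z \<delta> j + \<delta> j))"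

end

theory Submission
  imports Defs
begin

definition nb :: "(nat \<Rightarrow> nat) \<Rightarrow> (nat \<Rightarrow> nat) \<Rightarrow> nat \<Rightarrow> nat set" where
  "nb n x j = {e. 1 \<le> e \<and> e \<le> n j \<and> \<bar>int e - int (x j)\<bar> = 1}"

lemma finite_nb: "finite (nb n x j)"
  by (rule finite_subset[of _ "{..n j}"]) (auto simp: nb_def)

lemma finite_V: "finite (grid_V d n)"
proof -
  have "grid_V d n \<subseteq> {f. \<forall>x. (x \<in> {..<d} \<longrightarrow> f x \<in> {0..sum n {..<d}}) \<and> (x \<notin> {..<d} \<longrightarrow> f x = 0)}"
  proof
    fix f assume f: "f \<in> grid_V d n"
    have "\<And>j. j < d \<Longrightarrow> n j \<le> sum n {..<d}"
      by (rule member_le_sum) auto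
    then show "f \<in> {f. \<forall>x. (x \<in> {..<d} \<longrightarrow> f x \<in> {0..sum n {..<d}}) \<and> (x \<notin> {..<d} \<longrightarrow> f x = 0)}"
      using f unfolding grid_V_def by (auto intro: order_trans)
  qed
  then show ?thesis
    by (rule finite_subset) (intro finite_set_of_finite_funs, auto)
qed

lemma adj_image:
  assumes x: "x \<in> grid_V d n"
  shows "{y \<in> grid_V d n. grid_adj d n x y} = (\<lambda>(j,e). x(j := e)) ` Sigma {..<d} (nb n x)"
proof (intro set_eqI iffI)
  fix y assume "y \<in> {y \<in> grid_V d n. grid_adj d n x y}"
  then obtain j where y: "y \<in> grid_V d n" and j: "j < d" "\<bar>int (x j) - int (y j)\<bar> = 1"
    "\<forall>i. i \<noteq> j \<longrightarrow> x i = y i" unfolding grid_adj_def by auto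
  have "y = x(j := y j)" using j by (auto simp: fun_eq_iff)
  moreover have "(j, y j) \<in> Sigma {..<d} (nb n x)"
    using y j unfolding nb_def grid_V_def by auto
  ultimately show "y \<in> (\<lambda>(j,e). x(j := e)) ` Sigma {..<d} (nb n x)"
    by (metis (no_types, lifting) case_prod_conv image_eqI)
next
  fix y assume "y \<in> (\<lambda>(j,e). x(j := e)) ` Sigma {..<d} (nb n x)"
  then obtain j e where y: "y = x(j := e)" and j: "j < d" and e: "e \<in> nb n x j" by auto
  have yV: "y \<in> grid_V d n" using x y j e unfolding grid_V_def nb_def by auto
  moreover have "grid_adj d n x y" unfolding grid_adj_def
    using x yV y j e unfolding nb_def by (auto intro!: exI[of _ j])
  ultimately show "y \<in> {y \<in> grid_V d n. grid_adj d n x y}" by auto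
qed

lemma inj_upd: "inj_on (\<lambda>(j,e). x(j := e)) (Sigma {..<d} (nb n x))"
proof (rule inj_onI, clarify)
  fix j e j' e'
  assume e: "e \<in> nb n x j" and e': "e' \<in> nb n x j'" and eq: "x(j := e) = x(j' := e')"
  show "j = j' \<and> e = e'"
  proof (cases "j = j'")
    case True then show ?thesis using fun_cong[OF eq, of j] by auto
  next
    case False
    then have "e = x j" using fun_cong[OF eq, of j] by auto
    then show ?thesis using e unfolding nb_def by auto
  qed
qed

lemma S_sum:
  assumes x: "x \<in> grid_V d n"
  shows "(\<Sum>y\<in>grid_V d n. grid_S d n x y * g y) = (\<Sum>j<d. \<Sum>e\<in>nb n x j. g (x(j := e)))"
proof -
  have "(\<Sum>y\<in>grid_V d n. grid_S d n x y * g y) = (\<Sum>y\<in>grid_V d n. if grid_adj d n x y then g y else 0)"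
    by (rule sum.cong) (auto simp: grid_S_def)
  also have "\<dots> = (\<Sum>y\<in>{y \<in> grid_V d n. grid_adj d n x y}. g y)"
    by (rule sum.inter_filter[symmetric]) (rule finite_V)
  also have "\<dots> = (\<Sum>y\<in>(\<lambda>(j,e). x(j := e)) ` Sigma {..<d} (nb n x). g y)"
    using adj_image[OF x] by simp
  also have "\<dots> = (\<Sum>p\<in>Sigma {..<d} (nb n x). g ((\<lambda>(j,e). x(j := e)) p))"
    by (rule sum.reindex[OF inj_upd, unfolded comp_def])
  also have "\<dots> = (\<Sum>j<d. \<Sum>e\<in>nb n x j. g (x(j := e)))"
    by (subst sum.Sigma) (auto simp: finite_nb split_beta)
  finally show ?thesis .
qed

lemma cos_zpi: "cos (real z * pi - t) = (-1) ^ z * cos t"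
  by (simp add: cos_diff cos_npi sin_npi)

lemma dim_lemma:
  fixes N k z :: nat and th de lam :: real
  assumes N: "N \<ge> 3" and k: "1 \<le> k" "k \<le> N"
    and th: "th = (real z * pi - 2 * de) / (real N - 1)"
    and cd: "cos de \<noteq> 0" and lam: "lam = 1 + cos th + tan de * sin th"
  defines "F \<equiv> \<lambda>e::nat. (-1::real) ^ e * cos ((real e - 1) * th + de)"
    and "b \<equiv> (if k = 1 \<or> k = N then 1 else 0::real)"
    and "E \<equiv> {e. 1 \<le> e \<and> e \<le> N \<and> \<bar>int e - int k\<bar> = 1}"
  shows "(\<Sum>e\<in>E. F e) = (-2 * cos th + b * (lam - 1)) * F k \<and> real (card E) = 2 - b"
proof -
  have tc: "tan de * cos de = sin de" using cd by (simp add: tan_def)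
  have Nth: "(real N - 1) * th = real z * pi - 2 * de" using N th by simp
  consider "k = 1" | "k = N" | "1 < k" "k < N" using k by linarith
  then show ?thesis
  proof cases
    case 1
    then have E: "E = {2}" using N unfolding E_def by auto
    have "F 2 = cos (th + de)" unfolding F_def by simp
    also have "\<dots> = (-2 * cos th + (lam - 1)) * F 1"
      unfolding F_def lam using tc
      by (simp add: cos_add algebra_simps)
    finally show ?thesis using 1 E N unfolding b_def by simp
  next
    case 2
    then have E: "E = {N - 1}" using N unfolding E_def by auto
    have a1: "(real (N - 1) - 1) * th + de = real z * pi - (th + de)"
      using N Nth by (simp add: of_nat_diff algebra_simps)
    have a2: "(real N - 1) * th + de = real z * pi - de"
      using Nth by (simp add: algebra_simps)
    have pN: "(-1::real) ^ N = - ((-1) ^ (N - 1))"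
    proof -
      have "N = Suc (N - 1)" using N by simp
      then show ?thesis by (metis power_Suc mult_minus1)
    qed
    have "F (N - 1) = (-1) ^ (N - 1) * ((-1) ^ z * cos (th + de))"
      unfolding F_def a1 cos_zpi ..
    also have "\<dots> = (-2 * cos th + (lam - 1)) * F N"
      unfolding F_def a2 cos_zpi pN lam using tc
      by (simp add: cos_add algebra_simps)
    finally show ?thesis using 2 E N unfolding b_def by simp
  next
    case 3
    then have E: "E = {k - 1, k + 1}" unfolding E_def by auto
    have ne: "k - 1 \<noteq> k + 1" by simp
    have a1: "(real (k - 1) - 1) * th + de = ((real k - 1) * th + de) - th"
      using 3 by (simp add: of_nat_diff algebra_simps)
    have a2: "(real (k + 1) - 1) * th + de = ((real k - 1) * th + de) + th"
      by (simp add: algebra_simps)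
    have p1: "(-1::real) ^ (k - 1) = - ((-1) ^ k)"
    proof -
      have "k = Suc (k - 1)" using 3 by simp
      then show ?thesis by (metis power_Suc mult_minus1 minus_minus)
    qed
    have p2: "(-1::real) ^ (k + 1) = - ((-1) ^ k)" by simp
    have "F (k - 1) + F (k + 1) = -2 * cos th * F k"
    proof -
      have cc: "\<And>a. cos (a - th) + cos (a + th) = 2 * cos a * cos th"
        by (simp add: cos_add cos_diff)
      define a where "a = (real k - 1) * th + de"
      have "- ((-1::real) ^ k) * cos (a - th) + - ((-1) ^ k) * cos (a + th) = -2 * cos th * ((-1) ^ k * cos a)"
      proof -
        have "- ((-1::real) ^ k) * cos (a - th) + - ((-1) ^ k) * cos (a + th) = - ((-1) ^ k) * (cos (a - th) + cos (a + th))"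
          by (simp only: distrib_left)
        also have "\<dots> = - ((-1) ^ k) * (2 * cos a * cos th)" by (simp only: cc)
        finally show ?thesis by simp
      qed
      then show ?thesis unfolding F_def a1 a2 p1 p2 a_def[symmetric] by simp
    qed
    then show ?thesis using 3 E ne unfolding b_def by simp
  qed
qed

definition Fd :: "(nat \<Rightarrow> nat) \<Rightarrow> (nat \<Rightarrow> nat) \<Rightarrow> (nat \<Rightarrow> real) \<Rightarrow> nat \<Rightarrow> nat \<Rightarrow> real" where
  "Fd n z \<delta> j k = (-1) ^ k * cos ((real k - 1) * grid_theta n z \<delta> j + \<delta> j)"

definition bd :: "(nat \<Rightarrow> nat) \<Rightarrow> (nat \<Rightarrow> nat) \<Rightarrow> nat \<Rightarrow> real" where
  "bd n x j = (if x j = 1 \<or> x j = n j then 1 else 0)"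

lemma vertex_lemma:
  assumes x: "x \<in> grid_V d n"
    and n3: "\<forall>j<d. n j \<ge> 3"
    and cd: "\<forall>l<d. cos (\<delta> l) \<noteq> 0"
    and lam: "\<forall>l<d. lam = 1 + cos (grid_theta n z \<delta> l) + tan (\<delta> l) * sin (grid_theta n z \<delta> l)"
  shows "(\<Sum>y\<in>grid_V d n. grid_S d n x y * (\<Prod>j<d. Fd n z \<delta> j (y j)))
      = (\<Sum>j<d. -2 * cos (grid_theta n z \<delta> j) + bd n x j * (lam - 1)) * (\<Prod>j<d. Fd n z \<delta> j (x j))"
    and "grid_deg d n x = (\<Sum>j<d. 2 - bd n x j)"
proof -
  have D: "(\<Sum>e\<in>nb n x j. Fd n z \<delta> j e) = (-2 * cos (grid_theta n z \<delta> j) + bd n x j * (lam - 1)) * Fd n z \<delta> j (x j)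
      \<and> real (card (nb n x j)) = 2 - bd n x j" if j: "j < d" for j
    using dim_lemma[of "n j" "x j" "grid_theta n z \<delta> j" "z j" "\<delta> j" lam] x j n3 cd lam
    unfolding nb_def Fd_def bd_def grid_V_def grid_theta_def by auto
  have R: "(\<Prod>i<d. Fd n z \<delta> i ((x(j := e)) i)) = Fd n z \<delta> j e * (\<Prod>i\<in>{..<d} - {j}. Fd n z \<delta> i (x i))"
    if j: "j < d" for j e
  proof -
    have "(\<Prod>i<d. Fd n z \<delta> i ((x(j := e)) i)) = Fd n z \<delta> j e * (\<Prod>i\<in>{..<d} - {j}. Fd n z \<delta> i ((x(j := e)) i))"
      using prod.remove[of "{..<d}" j "\<lambda>i. Fd n z \<delta> i ((x(j := e)) i)"] j by simp
    also have "(\<Prod>i\<in>{..<d} - {j}. Fd n z \<delta> i ((x(j := e)) i)) = (\<Prod>i\<in>{..<d} - {j}. Fd n z \<delta> i (x i))"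
      by (rule prod.cong) auto
    finally show ?thesis .
  qed
  have Rx: "(\<Prod>i<d. Fd n z \<delta> i (x i)) = Fd n z \<delta> j (x j) * (\<Prod>i\<in>{..<d} - {j}. Fd n z \<delta> i (x i))"
    if j: "j < d" for j
    using R[OF j, of "x j"] by simp
  have "(\<Sum>y\<in>grid_V d n. grid_S d n x y * (\<Prod>j<d. Fd n z \<delta> j (y j)))
      = (\<Sum>j<d. \<Sum>e\<in>nb n x j. (\<Prod>i<d. Fd n z \<delta> i ((x(j := e)) i)))"
    by (rule S_sum[OF x])
  also have "\<dots> = (\<Sum>j<d. (\<Sum>e\<in>nb n x j. Fd n z \<delta> j e) * (\<Prod>i\<in>{..<d} - {j}. Fd n z \<delta> i (x i)))"
    by (rule sum.cong[OF refl], unfold sum_distrib_right, rule sum.cong[OF refl], rule R) simp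
  also have "\<dots> = (\<Sum>j<d. (-2 * cos (grid_theta n z \<delta> j) + bd n x j * (lam - 1)) * (\<Prod>j<d. Fd n z \<delta> j (x j)))"
    by (rule sum.cong) (auto simp: D Rx)
  also have "\<dots> = (\<Sum>j<d. -2 * cos (grid_theta n z \<delta> j) + bd n x j * (lam - 1)) * (\<Prod>j<d. Fd n z \<delta> j (x j))"
    by (rule sum_distrib_right[symmetric])
  finally show "(\<Sum>y\<in>grid_V d n. grid_S d n x y * (\<Prod>j<d. Fd n z \<delta> j (y j)))
      = (\<Sum>j<d. -2 * cos (grid_theta n z \<delta> j) + bd n x j * (lam - 1)) * (\<Prod>j<d. Fd n z \<delta> j (x j))" .
  have "grid_deg d n x = (\<Sum>y\<in>grid_V d n. grid_S d n x y * 1)"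
    unfolding grid_deg_def by simp
  also have "\<dots> = (\<Sum>j<d. real (card (nb n x j)))"
    unfolding S_sum[OF x] by simp
  also have "\<dots> = (\<Sum>j<d. 2 - bd n x j)"
    by (rule sum.cong) (auto simp: D)
  finally show "grid_deg d n x = (\<Sum>j<d. 2 - bd n x j)" .
qed

theorem theorem7:
  fixes d :: nat and n :: "nat \<Rightarrow> nat" and z :: "nat \<Rightarrow> nat"
    and \<delta> :: "nat \<Rightarrow> real" and lam :: real
  assumes "d \<ge> 1"
    and "\<forall>j<d. n j \<ge> 3"
    and "\<forall>j<d. z j \<le> n j - 1"
    and "\<forall>l<d. cos (\<delta> l) \<noteq> 0"
    and "2 * real d * lam = (\<Sum>j<d. 2 + 2 * cos (grid_theta n z \<delta> j))"
    and "\<forall>l<d. lam = 1 + cos (grid_theta n z \<delta> l) + tan (\<delta> l) * sin (grid_theta n z \<delta> l)"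
  shows "lam = 1 + (1 / real d) * (\<Sum>j<d. cos (grid_theta n z \<delta> j))
    \<and> is_eigenpair (grid_V d n) (grid_nlap d n) lam (grid_vec d n z \<delta>)"
proof -
  note d = assms(1) and n3 = assms(2) and cd = assms(4) and e5 = assms(5) and lamE = assms(6)
  define u where "u y = (\<Prod>j<d. Fd n z \<delta> j (y j))" for y
  define Cs where "Cs = (\<Sum>j<d. cos (grid_theta n z \<delta> j))"
  have s5: "(\<Sum>j<d. 2 + 2 * cos (grid_theta n z \<delta> j)) = 2 * real d + 2 * Cs"
    unfolding Cs_def by (simp add: sum.distrib sum_distrib_left)
  have dpos: "real d > 0" using d by simp
  have part1: "lam = 1 + (1 / real d) * Cs"
  proof -
    have "2 * real d * lam = 2 * real d * (1 + (1 / real d) * Cs)"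
      using e5 s5 dpos by (simp add: field_simps)
    then show ?thesis using dpos by simp
  qed
  have vec: "grid_vec d n z \<delta> y = sqrt (grid_deg d n y) * u y" for y
    unfolding grid_vec_def u_def Fd_def ..
  have degpos: "grid_deg d n y > 0" if y: "y \<in> grid_V d n" for y
  proof -
    have "(\<Sum>j<d. (1::real)) \<le> (\<Sum>j<d. 2 - bd n y j)"
      by (rule sum_mono) (simp add: bd_def)
    then show ?thesis using vertex_lemma(2)[OF y n3 cd lamE] dpos by simp
  qed
  have eig: "(\<Sum>y\<in>grid_V d n. grid_nlap d n x y * grid_vec d n z \<delta> y) = lam * grid_vec d n z \<delta> x"
    if x: "x \<in> grid_V d n" for x
  proof -
    define Dx where "Dx = grid_deg d n x"
    define C where "C = (\<Sum>j<d. -2 * cos (grid_theta n z \<delta> j) + bd n x j * (lam - 1))"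
    have Dxp: "Dx > 0" using degpos[OF x] unfolding Dx_def .
    have SC: "(\<Sum>y\<in>grid_V d n. grid_S d n x y * u y) = C * u x"
      using vertex_lemma(1)[OF x n3 cd lamE] unfolding C_def u_def .
    have DD: "Dx = (\<Sum>j<d. 2 - bd n x j)" using vertex_lemma(2)[OF x n3 cd lamE] unfolding Dx_def .
    have key: "Dx - C = lam * Dx"
    proof -
      have "Dx - C - lam * Dx = (\<Sum>j<d. (2 + 2 * cos (grid_theta n z \<delta> j)) - 2 * lam)"
        unfolding DD C_def sum_subtractf[symmetric] sum_distrib_left
        by (rule sum.cong) (auto simp: algebra_simps)
      also have "\<dots> = 0"
        unfolding sum_subtractf using e5 by simp
      finally show ?thesis by simp
    qed
    have "(\<Sum>y\<in>grid_V d n. grid_nlap d n x y * grid_vec d n z \<delta> y)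
        = (\<Sum>y\<in>grid_V d n. (1 / sqrt Dx) * (grid_L d n x y * u y))"
    proof (rule sum.cong[OF refl])
      fix y assume y: "y \<in> grid_V d n"
      have "sqrt (grid_deg d n y) > 0" using degpos[OF y] by simp
      then show "grid_nlap d n x y * grid_vec d n z \<delta> y = (1 / sqrt Dx) * (grid_L d n x y * u y)"
        unfolding grid_nlap_def vec Dx_def by (simp add: field_simps)
    qed
    also have "\<dots> = (1 / sqrt Dx) * (\<Sum>y\<in>grid_V d n. grid_L d n x y * u y)"
      by (simp add: sum_distrib_left)
    also have "(\<Sum>y\<in>grid_V d n. grid_L d n x y * u y)
        = (\<Sum>y\<in>grid_V d n. if y = x then Dx * u x else 0) - (\<Sum>y\<in>grid_V d n. grid_S d n x y * u y)"
      unfolding sum_subtractf[symmetric]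
      by (rule sum.cong) (auto simp: grid_L_def Dx_def left_diff_distrib)
    also have "\<dots> = Dx * u x - C * u x"
      using x finite_V SC by simp
    also have "\<dots> = lam * Dx * u x" using key by (simp add: left_diff_distrib[symmetric])
    also have "(1 / sqrt Dx) * (lam * Dx * u x) = lam * (sqrt Dx * u x)"
    proof -
      have sq: "Dx = sqrt Dx * sqrt Dx" using Dxp by simp
      have "sqrt Dx > 0" using Dxp by simp
      then show ?thesis by (subst sq) (simp add: field_simps)
    qed
    finally show ?thesis
      unfolding vec Dx_def[symmetric] .
  qed
  define x0 where "x0 = (\<lambda>j. if j < d then 1 else 0::nat)"
  have x0: "x0 \<in> grid_V d n" using n3 unfolding x0_def grid_V_def by auto
  have "u x0 \<noteq> 0"
    unfolding u_def Fd_def x0_def using cd by (simp add: prod_zero_iff)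
  then have "grid_vec d n z \<delta> x0 \<noteq> 0" using degpos[OF x0] unfolding vec by simp
  then show ?thesis
    unfolding is_eigenpair_def Cs_def[symmetric] using part1 eig x0 by blast
qed

end
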